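(* Let $f:[0,\infty)\to\mathbb{R}$ be differentiable, let $0<a<b<\infty$, and suppose $f'$ is Lebesgue integrable on $[a,b]$. Let $(\alpha,m)\in(0,1]^2$ and $q>1$, and suppose $|f'|^q$ is $(\alpha,m)$-GA-convex on $[0,\max\{a^{1/m},b\}]$. Then \[ \biggl|\frac{b^2f(b)-a^2f(a)}{2}-\int_a^b xf(x)\,dx\biggr|\le\frac{\ln b-\ln a}{2}\Bigl(\frac{1}{\alpha+1}\Bigr)^{1/q}\bigl[L\bigl(a^{3q/(q-1)},b^{3q/(q-1)}\bigr)\bigr]^{1-1/q}\Bigl[|f'(b)|^q+\alpha m\bigl|f'(a^{1/m})\bigr|^q\Bigr]^{1/q}. \]
   Context: For $c>0$, $h:[0,c]\to\mathbb{R}$ and $(\alpha,m)\in(0,1]^2$, $h$ is called $(\alpha,m)$-GA-convex on $[0,c]$ if $h\bigl(x^\lambda y^{m(1-\lambda)}\bigr)\le\lambda^\alpha h(x)+m(1-\lambda^\alpha)h(y)$ for all $x,y\in[0,c]$ and all $\lambda\in[0,1]$ (with the convention $0^0=1$). For $x,y>0$, $x\neq y$, the logarithmic mean is $L(x,y)=\frac{y-x}{\ln y-\ln x}$. *)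

theory Defs
  imports "HOL-Analysis.Analysis"
begin

definition gpow :: "real \<Rightarrow> real \<Rightarrow> real" where
  "gpow x t = (if t = 0 then 1 else x powr t)"

text \<open>(alpha,m)-GA-convexity of h on [0,c].  The inequality is required whenever
  the geometric combination lies in the domain [0,c] of h.\<close>
definition alpha_m_GA_convex :: "real \<Rightarrow> real \<Rightarrow> real \<Rightarrow> (real \<Rightarrow> real) \<Rightarrow> bool" where
  "alpha_m_GA_convex \<alpha> m c h \<longleftrightarrow>
     (\<forall>x\<in>{0..c}. \<forall>y\<in>{0..c}. \<forall>t\<in>{0..1}.
        gpow x t * gpow y (m * (1 - t)) \<in> {0..c} \<longrightarrow>
        h (gpow x t * gpow y (m * (1 - t)))
          \<le> gpow t \<alpha> * h x + m * (1 - gpow t \<alpha>) * h y)"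

definition logmean :: "real \<Rightarrow> real \<Rightarrow> real" where
  "logmean x y = (y - x) / (ln y - ln x)"

end

theory Submission
  imports Defs
begin

lemma gpow_pos: "x > 0 \<Longrightarrow> gpow x s = x powr s"
  by (simp add: gpow_def)

theorem theorem3p2:
  fixes f f' :: "real \<Rightarrow> real" and a b \<alpha> m q :: real
  assumes deriv: "\<And>x. x \<ge> 0 \<Longrightarrow> (f has_real_derivative f' x) (at x within {0..})"
    and ab: "0 < a" "a < b"
    and integ: "set_integrable lborel {a..b} f'"
    and alpha: "0 < \<alpha>" "\<alpha> \<le> 1"
    and m: "0 < m" "m \<le> 1"
    and q: "q > 1"
    and conv: "alpha_m_GA_convex \<alpha> m (max (a powr (1/m)) b) (\<lambda>x. \<bar>f' x\<bar> powr q)"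
  shows "\<bar>(b\<^sup>2 * f b - a\<^sup>2 * f a) / 2 - (LINT x:{a..b}|lborel. x * f x)\<bar>
         \<le> (ln b - ln a) / 2 * (1 / (\<alpha> + 1)) powr (1 / q)
           * (logmean (a powr (3 * q / (q - 1))) (b powr (3 * q / (q - 1)))) powr (1 - 1 / q)
           * (\<bar>f' b\<bar> powr q + \<alpha> * m * \<bar>f' (a powr (1 / m))\<bar> powr q) powr (1 / q)"
proof -
  define c where "c = ln b - ln a"
  have c: "c > 0" using ab by (simp add: c_def)
  define g where "g t = exp (ln a + c * t)" for t
  have g0: "g 0 = a" and g1: "g 1 = b" using ab by (simp_all add: g_def c_def)
  have gpos: "g t > 0" for t by (simp add: g_def)
  have grange: "g t \<in> {a..b}" if "t \<in> {0..1}" for t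
  proof -
    have "g 0 \<le> g t" "g t \<le> g 1" using that c by (auto simp: g_def mult_left_le)
    thus ?thesis using g0 g1 by simp
  qed
  have gder: "(g has_real_derivative g t * c) (at t within S)" for t S
    unfolding g_def by (auto intro!: derivative_eq_intros)
  have fcont: "continuous_on {0..} f"
    using deriv by (meson DERIV_continuous atLeast_iff continuous_at_imp_continuous_within continuous_on_eq_continuous_within has_field_derivative_at_within) 
  define K where "K = (\<lambda>x. integral {a..x} (\<lambda>s. s * f s))"
  have xfcont: "continuous_on {a..b} (\<lambda>s. s * f s)"
    by (intro continuous_intros continuous_on_subset[OF fcont]) (use ab in auto)
  have Kder: "(K has_real_derivative x * f x) (at x within {a..b})" if "x \<in> {a..b}" for x
    using integral_has_vector_derivative[OF xfcont that]
    by (simp add: K_def has_real_derivative_iff_has_vector_derivative)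
  have LINT: "(LINT x:{a..b}|lborel. x * f x) = K b"
    using set_borel_integral_eq_integral(2)[OF borel_integrable_atLeastAtMost'[OF xfcont]]
    by (simp add: K_def)
  have Ka: "K a = 0" by (simp add: K_def)
  define u where "u t = c / 2 * g t ^ 3 * f' (g t)" for t
  define \<psi> where "\<psi> = (\<lambda>t. g t * g t * f (g t) / 2 - K (g t))"
  have psider: "(\<psi> has_real_derivative u t) (at t within {0..1})" if t: "t \<in> {0..1}" for t
  proof -
    have gim: "g ` {0..1} \<subseteq> {a..b}" using grange by auto
    have f1: "(f has_real_derivative f' (g t)) (at (g t) within g ` {0..1})"
      by (rule has_field_derivative_subset[OF deriv]) (use gpos gim ab in \<open>auto simp: less_imp_le\<close>)
    have k1: "(K has_real_derivative g t * f (g t)) (at (g t) within g ` {0..1})"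
      by (rule has_field_derivative_subset[OF Kder[OF grange[OF t]] gim])
    have fg: "((\<lambda>t. f (g t)) has_real_derivative f' (g t) * (g t * c)) (at t within {0..1})"
      using DERIV_image_chain[OF f1 gder] by (simp add: o_def)
    have kg: "((\<lambda>t. K (g t)) has_real_derivative g t * f (g t) * (g t * c)) (at t within {0..1})"
      using DERIV_image_chain[OF k1 gder] by (simp add: o_def)
    have h2: "((\<lambda>x. g x * g x * f (g x) / 2 - K (g x)) has_real_derivative
        ((g t * c * g t + g t * (g t * c)) * f (g t) + g t * g t * (f' (g t) * (g t * c))) / 2
        - g t * f (g t) * (g t * c)) (at t within {0..1})"
    proof -
      have gg: "((\<lambda>x. g x * g x) has_real_derivative g t * c * g t + g t * (g t * c)) (at t within {0..1})"
        using DERIV_mult[OF gder gder] by simp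
      have ggf: "((\<lambda>x. g x * g x * f (g x)) has_real_derivative (g t * c * g t + g t * (g t * c)) * f (g t) + g t * g t * (f' (g t) * (g t * c))) (at t within {0..1})"
        using DERIV_mult[OF gg fg] by (simp add: mult_ac)
      show ?thesis by (intro DERIV_diff DERIV_cdivide ggf kg)
    qed
    show ?thesis unfolding \<psi>_def
      by (rule DERIV_cong[OF h2]) (simp add: u_def power3_eq_cube field_simps)
  qed
  have uint: "(u has_integral (\<psi> 1 - \<psi> 0)) {0..1}"
    by (rule fundamental_theorem_of_calculus) (use psider in \<open>auto simp: has_real_derivative_iff_has_vector_derivative[symmetric]\<close>)
  have LHS: "(b\<^sup>2 * f b - a\<^sup>2 * f a) / 2 - (LINT x:{a..b}|lborel. x * f x) = integral {0..1} u"
    using uint LINT Ka g0 g1 by (simp add: integral_unique \<psi>_def power2_eq_square field_simps)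
  define p where "p = q / (q - 1)"
  have p: "p > 1" using q by (simp add: p_def)
  have pq: "1 / p + 1 / q = 1" using q by (simp add: p_def field_simps)
  have p3: "3 * q / (q - 1) = 3 * p" by (simp add: p_def)
  have pinv: "1 - 1 / q = 1 / p" using pq by simp
  define P where "P = \<bar>f' b\<bar> powr q"
  define Qv where "Qv = \<bar>f' (a powr (1 / m))\<bar> powr q"
  have P0: "P \<ge> 0" and Q0: "Qv \<ge> 0" by (simp_all add: P_def Qv_def)
  define \<Phi> where "\<Phi> t = t powr \<alpha> * P + m * (1 - t powr \<alpha>) * Qv" for t
  define V where "V t = \<bar>f' (g t)\<bar>" for t
  define G where "G t = g t ^ 3" for t
  have V0: "V t \<ge> 0" for t by (simp add: V_def)
  have G0: "G t > 0" for t by (simp add: G_def gpos)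
  have gform: "gpow b t * gpow (a powr (1/m)) (m * (1 - t)) = g t" for t
  proof -
    have "gpow b t * gpow (a powr (1/m)) (m * (1 - t)) = b powr t * a powr (1 - t)"
      using ab m by (simp add: gpow_pos powr_powr)
    also have "\<dots> = exp (t * ln b) * exp ((1 - t) * ln a)"
      using ab by (simp add: powr_def)
    also have "\<dots> = g t" by (simp add: g_def c_def flip: exp_add) (simp add: algebra_simps)
    finally show ?thesis .
  qed
  have Vconv: "V t powr q \<le> \<Phi> t" if t: "t \<in> {0..1}" for t
  proof -
    have bin: "b \<in> {0..max (a powr (1/m)) b}" and ain: "a powr (1/m) \<in> {0..max (a powr (1/m)) b}"
      using ab by auto
    have gin: "g t \<in> {0..max (a powr (1/m)) b}" using grange[OF t] ab by auto
    have "\<bar>f' (g t)\<bar> powr q \<le> gpow t \<alpha> * P + m * (1 - gpow t \<alpha>) * Qv"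
      using conv[unfolded alpha_m_GA_convex_def, rule_format, OF bin ain t] gform gin
      by (simp add: P_def Qv_def)
    thus ?thesis using alpha by (simp add: V_def \<Phi>_def gpow_def)
  qed
  have tal: "t powr \<alpha> \<in> {0..1}" if "t \<in> {0..1}" for t
    using that alpha by (auto intro: powr_le1)
  have Phi_le: "\<Phi> t \<le> P + m * Qv" if "t \<in> {0..1}" for t
  proof -
    have "t powr \<alpha> * P \<le> P" using tal[OF that] P0 by (simp add: mult_left_le_one_le)
    moreover have "m * (1 - t powr \<alpha>) * Qv \<le> m * Qv"
      using tal[OF that] Q0 m by (simp add: mult_right_le_one_le mult_left_mono mult_right_mono)
    ultimately show ?thesis by (simp add: \<Phi>_def)
  qed
  define Mv where "Mv = (P + m * Qv) powr (1 / q)"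
  have Vle: "V t \<le> Mv" if "t \<in> {0..1}" for t
  proof -
    have "V t = (V t powr q) powr (1 / q)" using q V0[of t] by (simp add: powr_powr)
    also have "\<dots> \<le> (P + m * Qv) powr (1 / q)"
      using Vconv[OF that] Phi_le[OF that] q by (intro powr_mono2) auto
    finally show ?thesis by (simp add: Mv_def)
  qed
  have umeas: "u \<in> borel_measurable (lebesgue_on {0..1})"
    using uint by (intro integrable_imp_measurable) (auto simp: has_integral_iff)
  have gcont: "continuous_on S g" for S unfolding g_def by (intro continuous_intros)
  have f'g: "(\<lambda>t. f' (g t)) = (\<lambda>t. u t * (2 / (c * g t ^ 3)))"
  proof (rule ext)
    fix t have "g t \<noteq> 0" using gpos[of t] by simp
    thus "f' (g t) = u t * (2 / (c * g t ^ 3))" using c by (simp add: u_def field_simps)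
  qed
  have f'gmeas: "(\<lambda>t. f' (g t)) \<in> borel_measurable (lebesgue_on {0..1})"
    unfolding f'g
    by (intro borel_measurable_times umeas continuous_imp_measurable_on_sets_lebesgue)
       (use c gpos in \<open>auto intro!: continuous_intros gcont simp: less_imp_neq[symmetric]\<close>)
  define w where "w t = c / 2 * (G t * V t)" for t
  have wmeas: "w \<in> borel_measurable (lebesgue_on {0..1})"
    unfolding w_def V_def G_def
    by (intro borel_measurable_times borel_measurable_abs f'gmeas borel_measurable_const
        continuous_imp_measurable_on_sets_lebesgue) (auto intro!: continuous_intros gcont)
  have wbound: "\<bar>w t\<bar> \<le> c / 2 * (b ^ 3 * Mv)" if "t \<in> {0..1}" for t
  proof -
    have "G t \<le> b ^ 3" using grange[OF that] gpos[of t] by (auto simp: G_def intro: power_mono)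
    hence "G t * V t \<le> b ^ 3 * Mv" using Vle[OF that] V0[of t] G0[of t] ab
      by (intro mult_mono) auto
    thus ?thesis using c G0[of t] V0[of t] by (simp add: w_def abs_mult)
  qed
  have wint: "w integrable_on {0..1}"
    by (rule measurable_bounded_by_integrable_imp_integrable_real[OF wmeas _ wbound]) auto
  have uabs: "\<bar>u t\<bar> = w t" for t
    using c gpos[of t] by (simp add: u_def w_def G_def V_def abs_mult)
  have step1: "\<bar>integral {0..1} u\<bar> \<le> integral {0..1} w"
    using integral_norm_bound_integral[OF has_integral_integrable[OF uint] wint] uabs
    by auto
  have RHS0: "0 \<le> (ln b - ln a) / 2 * (1 / (\<alpha> + 1)) powr (1 / q)
           * (logmean (a powr (3 * q / (q - 1))) (b powr (3 * q / (q - 1)))) powr (1 - 1 / q)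
           * (\<bar>f' b\<bar> powr q + \<alpha> * m * \<bar>f' (a powr (1 / m))\<bar> powr q) powr (1 / q)"
    using ab by (intro mult_nonneg_nonneg) auto
  define S where "S = P + \<alpha> * m * Qv"
  define L where "L = logmean (a powr (3 * p)) (b powr (3 * p))"
  have S0: "S \<ge> 0" using P0 Q0 alpha m by (simp add: S_def)
  have Lpos: "L > 0"
  proof -
    have "a powr (3 * p) < b powr (3 * p)" using ab p by (intro powr_less_mono2) auto
    moreover have "ln (a powr (3 * p)) < ln (b powr (3 * p))" using ab p by simp
    ultimately show ?thesis by (simp add: L_def logmean_def)
  qed
  have RHSeq: "(ln b - ln a) / 2 * (1 / (\<alpha> + 1)) powr (1 / q)
           * (logmean (a powr (3 * q / (q - 1))) (b powr (3 * q / (q - 1)))) powr (1 - 1 / q)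
           * (\<bar>f' b\<bar> powr q + \<alpha> * m * \<bar>f' (a powr (1 / m))\<bar> powr q) powr (1 / q)
         = c / 2 * (L powr (1 / p) * (S / (\<alpha> + 1)) powr (1 / q))"
    by (simp add: c_def p3 pinv L_def S_def P_def Qv_def powr_divide)
  have main: "integral {0..1} w \<le> c / 2 * (L powr (1 / p) * (S / (\<alpha> + 1)) powr (1 / q))"
  proof (cases "S = 0")
    case True
    hence "P = 0" "Qv = 0" using P0 Q0 alpha m by (auto simp: S_def add_nonneg_eq_0_iff)
    hence "w t = 0" if "t \<in> {0..1}" for t
      using Vconv[OF that] V0[of t] q by (simp add: \<Phi>_def w_def)
    hence "integral {0..1} w = 0" by (intro integral_unique has_integral_is_0) auto
    thus ?thesis using Lpos c by simp
  next
    case False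
    hence Spos: "S > 0" using S0 by simp
    define A where "A = L powr (1 / p)"
    define B where "B = (S / (\<alpha> + 1)) powr (1 / q)"
    have Apos: "A > 0" using Lpos by (simp add: A_def)
    have Bpos: "B > 0" using Spos alpha by (simp add: B_def)
    have Ap: "A powr p = L" using Lpos p by (simp add: A_def powr_powr)
    have Bq: "B powr q = S / (\<alpha> + 1)" using Spos alpha q by (simp add: B_def powr_powr)
    have Gexp: "G t powr p = exp (3 * p * (ln a + c * t))" for t :: real
    proof -
      have "G t = exp (3 * (ln a + c * t))"
        by (simp add: G_def g_def flip: exp_of_nat_mult)
      thus ?thesis by (simp add: powr_def)
    qed
    have Gint: "((\<lambda>t. G t powr p) has_integral L) {0..1}"
    proof -
      define F where "F = (\<lambda>t. exp (3 * p * (ln a + c * t)) / (3 * p * c))"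
      have "((\<lambda>t. G t powr p) has_integral (F 1 - F 0)) {0..1}"
      proof (rule fundamental_theorem_of_calculus)
        fix t :: real assume "t \<in> {0..1}"
        have "(F has_real_derivative exp (3 * p * (ln a + c * t)) * (3 * p * c) / (3 * p * c)) (at t within {0..1})"
          unfolding F_def by (auto intro!: derivative_eq_intros)
        thus "(F has_vector_derivative G t powr p) (at t within {0..1})"
          using p c by (simp add: Gexp has_real_derivative_iff_has_vector_derivative[symmetric])
      qed simp
      moreover have "F 1 - F 0 = L"
      proof -
        have "ln a + c = ln b" by (simp add: c_def)
        hence "F 1 - F 0 = (exp (3 * p * ln b) - exp (3 * p * ln a)) / (3 * p * c)"
          by (simp add: F_def diff_divide_distrib)
        also have "\<dots> = L"
          using ab by (simp add: L_def logmean_def powr_def c_def algebra_simps)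
        finally show ?thesis .
      qed
      ultimately show ?thesis by simp
    qed
    have Phiint: "(\<Phi> has_integral S / (\<alpha> + 1)) {0..1}"
    proof -
      have h: "((\<lambda>t. t powr \<alpha>) has_integral 1 / (\<alpha> + 1)) {0..1}"
        using has_integral_powr_from_0[of \<alpha> 1] alpha by simp
      have "((\<lambda>t. t powr \<alpha> * (P - m * Qv) + m * Qv) has_integral
               (1 / (\<alpha> + 1) * (P - m * Qv) + m * Qv)) {0..1}"
        using has_integral_add[OF has_integral_mult_left[OF h] has_integral_const_real[of "m * Qv" 0 1]]
        by simp
      moreover have "(\<lambda>t. t powr \<alpha> * (P - m * Qv) + m * Qv) = \<Phi>"
        by (rule ext) (simp add: \<Phi>_def algebra_simps)
      moreover have "1 / (\<alpha> + 1) * (P - m * Qv) + m * Qv = S / (\<alpha> + 1)"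
        using alpha by (simp add: S_def field_simps)
      ultimately show ?thesis by simp
    qed
    define K where "K = c / 2 * (A * B)"
    have Kpos: "K > 0" using c Apos Bpos by (simp add: K_def)
    have pw: "w t / K \<le> G t powr p / L / p + \<Phi> t / (S / (\<alpha> + 1)) / q" if t: "t \<in> {0..1}" for t
    proof -
      have "w t / K = (G t / A) * (V t / B)"
        using c Apos Bpos by (simp add: w_def K_def field_simps)
      also have "\<dots> \<le> (G t / A) powr p / p + (V t / B) powr q / q"
        using p q pq G0[of t] V0[of t] Apos Bpos by (intro Youngs_inequality) auto
      also have "\<dots> = G t powr p / L / p + V t powr q / (S / (\<alpha> + 1)) / q"
        by (simp add: powr_divide Ap Bq)
      also have "\<dots> \<le> G t powr p / L / p + \<Phi> t / (S / (\<alpha> + 1)) / q"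
        using Vconv[OF t] Spos alpha q by (simp add: divide_right_mono)
      finally show ?thesis .
    qed
    have "integral {0..1} w / K \<le> L / L / p + (S / (\<alpha> + 1)) / (S / (\<alpha> + 1)) / q"
      by (rule has_integral_le[OF has_integral_divide[OF integrable_integral[OF wint]]
            has_integral_add[OF has_integral_divide[OF has_integral_divide[OF Gint]]
               has_integral_divide[OF has_integral_divide[OF Phiint]]]])
         (use pw in auto)
    also have "\<dots> = 1" using Lpos Spos alpha pq by simp
    finally have "integral {0..1} w \<le> K" using Kpos by simp
    thus ?thesis by (simp add: K_def A_def B_def)
  qed
  show ?thesis
    using LHS step1 main RHSeq by simp
qed

end
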